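(* Let $A$ be a finite-dimensional complex associative algebra, regarded as a real associative algebra. On $\mathfrak{aff}(A)$ define $J(a,b)=(b,-a)$ and $K(a,b)=(-ia,ib)$ for $a,b\in A$. Then $J$ and $K$ are complex structures on $\mathfrak{aff}(A)$ and $JK=-KJ$; hence $\mathfrak{aff}(A)$ carries a hypercomplex structure.
   Context: For a real associative algebra $A$, $\mathfrak{aff}(A)$ is the Lie algebra $A\oplus A$ with bracket $[(a,b),(a',b')]=(aa'-a'a,\ ab'-a'b)$. A complex structure on a real Lie algebra $\mathfrak g$ is a linear map $J$ with $J^2=-\mathrm{Id}$ and $J[x,y]-[Jx,y]-[x,Jy]-J[Jx,Jy]=0$ for all $x,y$. A hypercomplex structure is a pair of anticommuting complex structures. *)

theory Defs
  imports "HOL-Analysis.Analysis"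
begin

definition complex_assoc_algebra :: "(complex \<Rightarrow> 'a::ring \<Rightarrow> 'a) \<Rightarrow> bool" where
  "complex_assoc_algebra smul \<longleftrightarrow>
     vector_space smul \<and>
     (\<forall>c x y. smul c (x * y) = smul c x * y \<and> smul c (x * y) = x * smul c y)"

definition fin_dim_complex :: "(complex \<Rightarrow> 'a::ring \<Rightarrow> 'a) \<Rightarrow> bool" where
  "fin_dim_complex smul \<longleftrightarrow> (\<exists>B. finite B \<and> module.span smul B = UNIV)"

text \<open>The underlying real scalar multiplication on aff(A) = A \<oplus> A.\<close>
definition aff_scaleR :: "(complex \<Rightarrow> 'a::ring \<Rightarrow> 'a) \<Rightarrow> real \<Rightarrow> 'a \<times> 'a \<Rightarrow> 'a \<times> 'a" where
  "aff_scaleR smul r p = (smul (complex_of_real r) (fst p), smul (complex_of_real r) (snd p))"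

definition aff_bracket :: "'a::ring \<times> 'a \<Rightarrow> 'a \<times> 'a \<Rightarrow> 'a \<times> 'a" where
  "aff_bracket p q =
     (fst p * fst q - fst q * fst p, fst p * snd q - fst q * snd p)"

definition aff_complex_structure ::
    "(complex \<Rightarrow> 'a::ring \<Rightarrow> 'a) \<Rightarrow> ('a \<times> 'a \<Rightarrow> 'a \<times> 'a) \<Rightarrow> bool" where
  "aff_complex_structure smul J \<longleftrightarrow>
     Vector_Spaces.linear (aff_scaleR smul) (aff_scaleR smul) J \<and>
     (\<forall>x. J (J x) = - x) \<and>
     (\<forall>x y. J (aff_bracket x y) - aff_bracket (J x) y - aff_bracket x (J y)
              - J (aff_bracket (J x) (J y)) = 0)"

definition aff_hypercomplex_structure ::
    "(complex \<Rightarrow> 'a::ring \<Rightarrow> 'a) \<Rightarrow> ('a \<times> 'a \<Rightarrow> 'a \<times> 'a) \<Rightarrow> ('a \<times> 'a \<Rightarrow> 'a \<times> 'a) \<Rightarrow> bool" where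
  "aff_hypercomplex_structure smul J K \<longleftrightarrow>
     aff_complex_structure smul J \<and> aff_complex_structure smul K \<and>
     (\<forall>x. J (K x) = - K (J x))"

end

theory Submission
  imports Defs
begin

lemma aff_vs:
  assumes "vector_space smul"
  shows "vector_space (aff_scaleR (smul :: complex \<Rightarrow> 'a::ring \<Rightarrow> 'a))"
proof -
  interpret vector_space smul by fact
  show ?thesis
    by unfold_locales
      (auto simp: aff_scaleR_def scale_right_distrib scale_left_distrib)
qed

theorem mainTheorem4:
  fixes smul :: "complex \<Rightarrow> 'a::ring \<Rightarrow> 'a"
    and J K :: "'a \<times> 'a \<Rightarrow> 'a \<times> 'a"
  assumes alg: "complex_assoc_algebra smul"
    and fin: "fin_dim_complex smul"
    and J_def: "\<And>a b. J (a, b) = (b, - a)"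
    and K_def: "\<And>a b. K (a, b) = (- smul \<i> a, smul \<i> b)"
  shows "aff_complex_structure smul J \<and> aff_complex_structure smul K
         \<and> (\<forall>x. J (K x) = - K (J x))
         \<and> aff_hypercomplex_structure smul J K"
proof -
  have vs: "vector_space smul" and ml: "\<And>c x y. smul c (x * y) = smul c x * y"
    and mr: "\<And>c x y. smul c (x * y) = x * smul c y"
    using alg unfolding complex_assoc_algebra_def by metis+
  interpret vector_space smul by fact
  interpret A: vector_space "aff_scaleR smul" using aff_vs[OF vs] .
  have ii: "smul \<i> (smul \<i> a) = - a" for a
    by (simp add: scale_minus_left[symmetric])
  have comm: "smul \<i> (smul (complex_of_real r) a) = smul (complex_of_real r) (smul \<i> a)" for r a
    by (simp add: mult.commute)
  have Jfun: "J = (\<lambda>p. (snd p, - fst p))" using J_def by (auto simp: fun_eq_iff)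
  have Kfun: "K = (\<lambda>p. (- smul \<i> (fst p), smul \<i> (snd p)))" using K_def by (auto simp: fun_eq_iff)
  have linJ: "Vector_Spaces.linear (aff_scaleR smul) (aff_scaleR smul) J"
    unfolding Vector_Spaces.linear_def module_hom_def module_hom_axioms_def
    using A.vector_space_axioms A.module_axioms
    by (auto simp: Jfun aff_scaleR_def scale_right_distrib A.module_axioms[unfolded module_iff_vector_space])
  have linK: "Vector_Spaces.linear (aff_scaleR smul) (aff_scaleR smul) K"
    unfolding Vector_Spaces.linear_def module_hom_def module_hom_axioms_def
    using A.vector_space_axioms A.module_axioms
    by (auto simp: Kfun aff_scaleR_def scale_right_distrib comm A.module_axioms[unfolded module_iff_vector_space])
  have cJ: "aff_complex_structure smul J"
    unfolding aff_complex_structure_def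
    using linJ by (auto simp: Jfun aff_bracket_def algebra_simps)
  have cK: "aff_complex_structure smul K"
    unfolding aff_complex_structure_def
    using linK by (auto simp: Kfun aff_bracket_def algebra_simps ii scale_right_diff_distrib
        ml[symmetric] mr[symmetric] scale_minus_right)
  have JK: "\<forall>x. J (K x) = - K (J x)" by (auto simp: Jfun Kfun scale_minus_right)
  show ?thesis using cJ cK JK by (simp add: aff_hypercomplex_structure_def)
qed

end
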